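(* Let $\Gamma$ be a bipartite graph and let $f:\Gamma\to\Gamma$ be a graph map that preserves the bipartite structure and maps each edge to an edge path of length at least $1$. Then the split map $S(f):S(\Gamma)\to S(\Gamma)$ is a traintrack map.
   Context: A graph map sends vertices to vertices and each edge to an edge path (backtracking allowed). Let $\Gamma$ have vertex parts $V_0,V_1$ and edges $x_1,x_2,\dots$ each oriented from its $V_0$-endpoint to its $V_1$-endpoint; preserving the bipartite structure means $f(V_0)\subset V_0$, $f(V_1)\subset V_1$, so each $f(x_i)$ has odd number of edges $\|f(x_i)\|$. Prototype maps on $P_7$ (vertices $v_0,v_1$, edges $a,\dots,g$ oriented $v_0\to v_1$, uppercase = reversed): $\phi_1=\mathrm{id}$ and, for $m\ge0$, $\phi_{3+2m}$: $a\mapsto aG(aB)^ma$, $b\mapsto bD(bC)^mb$, $c\mapsto cF(cA)^mc$, $d\mapsto aB(aB)^ma$, $e\mapsto cB(aB)^ma$, $f\mapsto aC(aB)^ma$, $g\mapsto bE(bA)^mb$. The split graph $S(\Gamma)$ replaces each edge $x_i$ by seven parallel edges $a_i,\dots,g_i$ with the same endpoints and orientation. The split map $S(f)$ sends $y_i$ ($y\in\{a,\dots,g\}$) to the path obtained from the word $\phi_{\|f(x_i)\|}(y)$ by giving its $t$-th letter the subscript of the $t$-th edge of $f(x_i)$. Traintrack map: a direction at a vertex is an oriented edge germ leaving it; a turn is an unordered pair of directions at a vertex; a traintrack structure is a partition of turns into legal and illegal ones with every backtracking turn (a direction paired with itself) illegal; a path is legal if it is locally injective and makes only legal turns. A graph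 map $h$ is taut if it is a local embedding on the interior of each edge, and it is a traintrack map if it is taut and there is a traintrack structure such that $h$ sends legal turns to legal turns and every edge to a legal path. *)

theory Defs
  imports Main
begin

(* An oriented edge is (e, True) (traversed src -> tgt)
   or (e, False) (traversed tgt -> src, the "uppercase" letter). *)

type_synonym 'e oedge = "'e \<times> bool"

definition ostart :: "('e \<Rightarrow> 'v) \<Rightarrow> ('e \<Rightarrow> 'v) \<Rightarrow> 'e oedge \<Rightarrow> 'v" where
  "ostart src tgt d = (if snd d then src (fst d) else tgt (fst d))"

definition oend :: "('e \<Rightarrow> 'v) \<Rightarrow> ('e \<Rightarrow> 'v) \<Rightarrow> 'e oedge \<Rightarrow> 'v" where
  "oend src tgt d = (if snd d then tgt (fst d) else src (fst d))"

definition orev :: "'e oedge \<Rightarrow> 'e oedge" where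
  "orev d = (fst d, \<not> snd d)"

definition rev_path :: "'e oedge list \<Rightarrow> 'e oedge list" where
  "rev_path p = rev (map orev p)"

definition edge_path :: "('e \<Rightarrow> 'v) \<Rightarrow> ('e \<Rightarrow> 'v) \<Rightarrow> 'v \<Rightarrow> 'e oedge list \<Rightarrow> 'v \<Rightarrow> bool" where
  "edge_path src tgt u p w =
     (if p = [] then u = w
      else ostart src tgt (hd p) = u \<and> oend src tgt (last p) = w \<and>
           (\<forall>i. i + 1 < length p \<longrightarrow> oend src tgt (p ! i) = ostart src tgt (p ! (i + 1))))"

definition graph_map :: "('e \<Rightarrow> 'v) \<Rightarrow> ('e \<Rightarrow> 'v) \<Rightarrow> ('v \<Rightarrow> 'v) \<Rightarrow> ('e \<Rightarrow> 'e oedge list) \<Rightarrow> bool" where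
  "graph_map src tgt hv he = (\<forall>e. edge_path src tgt (hv (src e)) (he e) (hv (tgt e)))"

definition oimg :: "('e \<Rightarrow> 'e oedge list) \<Rightarrow> 'e oedge \<Rightarrow> 'e oedge list" where
  "oimg he d = (if snd d then he (fst d) else rev_path (he (fst d)))"

(* taut: local embedding on the interior of each edge, i.e. each edge goes to a
   nondegenerate edge path without backtracking *)
definition taut :: "('e \<Rightarrow> 'e oedge list) \<Rightarrow> bool" where
  "taut he = (\<forall>e. he e \<noteq> [] \<and>
      (\<forall>i. i + 1 < length (he e) \<longrightarrow> he e ! (i + 1) \<noteq> orev (he e ! i)))"

(* Directions at a vertex v are the oriented edges d with ostart d = v (the germ
   of d at its initial point); a turn is an unordered pair of directions at the
   same vertex.  A traintrack structure is given by the (symmetric) relation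
   "the turn {d1,d2} is legal"; all other turns are illegal; backtracking turns
   {d,d} must be illegal. *)
definition tt_structure :: "('e \<Rightarrow> 'v) \<Rightarrow> ('e \<Rightarrow> 'v) \<Rightarrow> ('e oedge \<Rightarrow> 'e oedge \<Rightarrow> bool) \<Rightarrow> bool" where
  "tt_structure src tgt legal =
     ((\<forall>d1 d2. legal d1 d2 \<longrightarrow> ostart src tgt d1 = ostart src tgt d2) \<and>
      (\<forall>d1 d2. legal d1 d2 = legal d2 d1) \<and>
      (\<forall>d. \<not> legal d d))"

(* legal path: locally injective and all turns taken are legal; the turn taken
   between consecutive edges p!i, p!(i+1) is {orev (p!i), p!(i+1)} *)
definition legal_path :: "('e oedge \<Rightarrow> 'e oedge \<Rightarrow> bool) \<Rightarrow> 'e oedge list \<Rightarrow> bool" where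
  "legal_path legal p =
     (\<forall>i. i + 1 < length p \<longrightarrow>
        p ! (i + 1) \<noteq> orev (p ! i) \<and> legal (orev (p ! i)) (p ! (i + 1)))"

definition traintrack_map :: "('e \<Rightarrow> 'v) \<Rightarrow> ('e \<Rightarrow> 'v) \<Rightarrow> ('v \<Rightarrow> 'v) \<Rightarrow> ('e \<Rightarrow> 'e oedge list) \<Rightarrow> bool" where
  "traintrack_map src tgt hv he =
     (graph_map src tgt hv he \<and> taut he \<and>
      (\<exists>legal. tt_structure src tgt legal \<and>
         (\<forall>d1 d2. legal d1 d2 \<longrightarrow> legal (hd (oimg he d1)) (hd (oimg he d2))) \<and>
         (\<forall>e. legal_path legal (he e))))"

definition bipartite_oriented :: "('e \<Rightarrow> 'v) \<Rightarrow> ('e \<Rightarrow> 'v) \<Rightarrow> 'v set \<Rightarrow> bool" where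
  "bipartite_oriented src tgt V0 = (\<forall>e. src e \<in> V0 \<and> tgt e \<notin> V0)"

datatype letter = La | Lb | Lc | Ld | Le | Lf | Lg

definition rep :: "nat \<Rightarrow> 'a list \<Rightarrow> 'a list" where
  "rep m xs = concat (replicate m xs)"

(* prototype maps phi_n on P_7; (x, True) = lowercase x, (x, False) = uppercase X.
   phi_1 = id, phi_(3+2m) as in the paper (only odd n are used). *)
definition phi :: "nat \<Rightarrow> letter \<Rightarrow> letter oedge list" where
  "phi n y = (if n = 1 then [(y, True)] else
    (let m = (n - 3) div 2 in
     case y of
       La \<Rightarrow> [(La,True),(Lg,False)] @ rep m [(La,True),(Lb,False)] @ [(La,True)]
     | Lb \<Rightarrow> [(Lb,True),(Ld,False)] @ rep m [(Lb,True),(Lc,False)] @ [(Lb,True)]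
     | Lc \<Rightarrow> [(Lc,True),(Lf,False)] @ rep m [(Lc,True),(La,False)] @ [(Lc,True)]
     | Ld \<Rightarrow> [(La,True),(Lb,False)] @ rep m [(La,True),(Lb,False)] @ [(La,True)]
     | Le \<Rightarrow> [(Lc,True),(Lb,False)] @ rep m [(La,True),(Lb,False)] @ [(La,True)]
     | Lf \<Rightarrow> [(La,True),(Lc,False)] @ rep m [(La,True),(Lb,False)] @ [(La,True)]
     | Lg \<Rightarrow> [(Lb,True),(Le,False)] @ rep m [(Lb,True),(La,False)] @ [(Lb,True)]))"

(* split graph S(Gamma): edge (x, y) parallel to x *)
definition split_src :: "('e \<Rightarrow> 'v) \<Rightarrow> ('e \<times> letter) \<Rightarrow> 'v" where
  "split_src src ey = src (fst ey)"

definition split_tgt :: "('e \<Rightarrow> 'v) \<Rightarrow> ('e \<times> letter) \<Rightarrow> 'v" where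
  "split_tgt tgt ey = tgt (fst ey)"

(* split map S(f) on edges: y_i |-> phi_{|f(x_i)|}(y) with the t-th letter given
   the subscript of the t-th edge of f(x_i) (orientation taken from the word) *)
definition split_map :: "('e \<Rightarrow> 'e oedge list) \<Rightarrow> ('e \<times> letter) \<Rightarrow> ('e \<times> letter) oedge list" where
  "split_map fe ey =
     map (\<lambda>((l, b), (x, _)). ((x, l), b)) (zip (phi (length (fe (fst ey))) (snd ey)) (fe (fst ey)))"

end

theory Submission
  imports Defs
begin

fun A0 :: "letter \<Rightarrow> letter" where
  "A0 La = La" | "A0 Lb = Lb" | "A0 Lc = Lc" | "A0 Ld = La" | "A0 Le = Lc" | "A0 Lf = La" | "A0 Lg = Lb"
fun U1 :: "letter \<Rightarrow> letter" where
  "U1 La = Lg" | "U1 Lb = Ld" | "U1 Lc = Lf" | "U1 Ld = Lb" | "U1 Le = Lb" | "U1 Lf = Lc" | "U1 Lg = Le"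
fun Aa :: "letter \<Rightarrow> letter" where
  "Aa La = La" | "Aa Lb = Lb" | "Aa Lc = Lc" | "Aa Ld = La" | "Aa Le = La" | "Aa Lf = La" | "Aa Lg = Lb"
fun Uu :: "letter \<Rightarrow> letter" where
  "Uu La = Lb" | "Uu Lb = Lc" | "Uu Lc = La" | "Uu Ld = Lb" | "Uu Le = Lb" | "Uu Lf = Lb" | "Uu Lg = La"

definition RS :: "(letter \<times> letter) set" where
  "RS = {(La,Lb),(La,Lc),(Lb,Lc),(La,Lg),(Lb,Ld),(Lc,Lf),(Lb,Le)}"

definition Rl :: "letter \<Rightarrow> letter \<Rightarrow> bool" where
  "Rl l1 l2 = ((l1,l2) \<in> RS \<or> (l2,l1) \<in> RS)"

lemma Rl_irrefl: "\<not> Rl l l"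
  by (cases l) (auto simp: Rl_def RS_def)

lemma Rl_sym: "Rl l1 l2 = Rl l2 l1"
  by (auto simp: Rl_def)

lemma Rl_A0: "Rl l1 l2 \<Longrightarrow> Rl (A0 l1) (A0 l2) \<and> Rl (A0 l1) l2 \<and> Rl l1 (A0 l2)"
  by (cases l1; cases l2) (auto simp: Rl_def RS_def)

lemma Rl_Aa: "Rl l1 l2 \<Longrightarrow> Rl (Aa l1) (Aa l2) \<and> Rl (Aa l1) l2 \<and> Rl l1 (Aa l2)"
  by (cases l1; cases l2) (auto simp: Rl_def RS_def)

definition pl :: "nat \<Rightarrow> letter \<Rightarrow> nat \<Rightarrow> letter" where
  "pl n y i = (if n = 1 then y else if i = 0 then A0 y else if i = 1 then U1 y
               else if even i then Aa y else Uu y)"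

lemma rep_len: "length (rep m [u,v]) = 2*m"
  by (induction m) (auto simp: rep_def)

lemma rep_nth: "j < 2*m \<Longrightarrow> rep m [u,v] ! j = (if even j then u else v)"
proof (induction m arbitrary: j)
  case 0 then show ?case by simp
next
  case (Suc m)
  have e: "rep (Suc m) [u,v] = [u,v] @ rep m [u,v]" by (simp add: rep_def)
  show ?case
  proof (cases "j < 2")
    case True then show ?thesis using e
      by (cases j) (auto simp: nth_append less_Suc_eq)
  next
    case False
    then obtain k where k: "j = Suc (Suc k)" by (metis less_2_cases_iff not0_implies_Suc One_nat_def)
    then have "k < 2*m" using Suc.prems by simp
    then show ?thesis using e k Suc.IH[of k] by simp
  qed
qed

definition wd :: "letter \<Rightarrow> letter \<Rightarrow> letter \<Rightarrow> letter \<Rightarrow> nat \<Rightarrow> letter oedge list" where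
  "wd u0 v1 u v m = [(u0,True),(v1,False)] @ rep m [(u,True),(v,False)] @ [(u,True)]"

lemma word_nth:
  assumes "i < 2*m+3"
  shows "([(u0,True),(v1,False)] @ rep m [(u,True),(v,False)] @ [(u,True)]) ! i =
    (if i=0 then (u0,True) else if i=1 then (v1,False) else if even i then (u,True) else (v,False))"
proof (cases "i < 2")
  case True then show ?thesis by (cases i) (auto simp: less_Suc_eq)
next
  case False
  then obtain k where k: "i = Suc (Suc k)" by (metis less_2_cases_iff not0_implies_Suc One_nat_def)
  show ?thesis
  proof (cases "k < 2*m")
    case True
    then show ?thesis using k rep_nth[OF True, of "(u,True)" "(v,False)"]
      by (simp add: nth_append rep_len)
  next
    case F2: False
    then have "k = 2*m" using assms k by simp
    then show ?thesis using k by (simp add: nth_append rep_len)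
  qed
qed

lemma word_len: "length ([(u0,True),(v1,False)] @ rep m [(u,True),(v,False)] @ [(u,True)]) = 2*m+3"
  by (simp add: rep_len)

lemma wd_nth: "i < 2*m+3 \<Longrightarrow> wd u0 v1 u v m ! i =
    (if i=0 then (u0,True) else if i=1 then (v1,False) else if even i then (u,True) else (v,False))"
  unfolding wd_def by (rule word_nth)

lemma wd_len: "length (wd u0 v1 u v m) = 2*m+3"
  unfolding wd_def by (rule word_len)

lemma phi_all:
  assumes "odd n"
  shows "length (phi n y) = n \<and> (\<forall>i<n. phi n y ! i = (pl n y i, even i))"
proof (cases "n = 1")
  case True then show ?thesis by (simp add: phi_def pl_def)
next
  case False
  obtain k where k: "n = 2*k+1" using assms oddE by blast
  then have k1: "k \<ge> 1" using False by simp
  define m where "m = k - 1"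
  have n: "n = 2*m+3" using k k1 m_def by simp
  have md: "(n - 3) div 2 = m" using n by simp
  have pn: "phi n y = (case y of
       La \<Rightarrow> [(La,True),(Lg,False)] @ rep m [(La,True),(Lb,False)] @ [(La,True)]
     | Lb \<Rightarrow> [(Lb,True),(Ld,False)] @ rep m [(Lb,True),(Lc,False)] @ [(Lb,True)]
     | Lc \<Rightarrow> [(Lc,True),(Lf,False)] @ rep m [(Lc,True),(La,False)] @ [(Lc,True)]
     | Ld \<Rightarrow> [(La,True),(Lb,False)] @ rep m [(La,True),(Lb,False)] @ [(La,True)]
     | Le \<Rightarrow> [(Lc,True),(Lb,False)] @ rep m [(La,True),(Lb,False)] @ [(La,True)]
     | Lf \<Rightarrow> [(La,True),(Lc,False)] @ rep m [(La,True),(Lb,False)] @ [(La,True)]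
     | Lg \<Rightarrow> [(Lb,True),(Le,False)] @ rep m [(Lb,True),(La,False)] @ [(Lb,True)])"
    using False unfolding phi_def Let_def md by simp
  have pn': "phi n y = (case y of La \<Rightarrow> wd La Lg La Lb m | Lb \<Rightarrow> wd Lb Ld Lb Lc m | Lc \<Rightarrow> wd Lc Lf Lc La m
     | Ld \<Rightarrow> wd La Lb La Lb m | Le \<Rightarrow> wd Lc Lb La Lb m | Lf \<Rightarrow> wd La Lc La Lb m | Lg \<Rightarrow> wd Lb Le Lb La m)"
    unfolding pn wd_def by simp
  have pl: "pl n y i = (if i = 0 then A0 y else if i = 1 then U1 y
               else if even i then Aa y else Uu y)" for i
    using False by (simp add: pl_def)
  show ?thesis
    unfolding pn' pl
    by (cases y) (auto simp: wd_nth wd_len n)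
qed


lemma pl_turn: "odd n \<Longrightarrow> i+1 < n \<Longrightarrow> Rl (pl n y i) (pl n y (i+1))"
  by (cases y) (auto simp: pl_def Rl_def RS_def)

lemma pl_last: "odd n \<Longrightarrow> pl n y (n-1) = (if n = 1 then y else Aa y)"
proof -
  assume o: "odd n"
  show ?thesis
  proof (cases "n = 1")
    case False
    then have "n \<ge> 3" using o by (metis One_nat_def Suc_1 dvd_refl le_antisym not_less_eq_eq numeral_3_eq_3 odd_pos Suc_leI)
    moreover have "even (n - 1)" using o by simp
    ultimately show ?thesis using False by (auto simp: pl_def)
  qed (simp add: pl_def)
qed

lemma fe_orient:
  assumes bip: "bipartite_oriented src tgt V0"
    and gm: "graph_map src tgt fv fe"
    and p0: "\<forall>v. v \<in> V0 \<longrightarrow> fv v \<in> V0"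
    and p1: "\<forall>v. v \<notin> V0 \<longrightarrow> fv v \<notin> V0"
    and ne: "fe x \<noteq> []"
  shows "odd (length (fe x)) \<and> (\<forall>i<length (fe x). snd (fe x ! i) = even i)"
proof -
  define p where "p = fe x"
  have ep: "edge_path src tgt (fv (src x)) p (fv (tgt x))" using gm p_def by (simp add: graph_map_def)
  have pne: "p \<noteq> []" using ne p_def by simp
  have st: "ostart src tgt (p ! 0) = fv (src x)" using ep pne by (simp add: edge_path_def hd_conv_nth)
  have en: "oend src tgt (p ! (length p - 1)) = fv (tgt x)" using ep pne by (simp add: edge_path_def last_conv_nth)
  have ch: "\<And>i. i + 1 < length p \<Longrightarrow> oend src tgt (p ! i) = ostart src tgt (p ! (i + 1))"
    using ep pne by (simp add: edge_path_def)
  have sv: "\<And>d. snd d = (ostart src tgt d \<in> V0)" using bip by (auto simp: bipartite_oriented_def ostart_def)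
  have ev: "\<And>d. (oend src tgt d \<in> V0) = (\<not> snd d)" using bip by (auto simp: bipartite_oriented_def oend_def)
  have sx: "src x \<in> V0" "tgt x \<notin> V0" using bip by (auto simp: bipartite_oriented_def)
  have cl: "i < length p \<Longrightarrow> (ostart src tgt (p ! i) \<in> V0) = even i" for i
  proof (induction i)
    case 0 then show ?case using st sx p0 by simp
  next
    case (Suc i)
    then have "ostart src tgt (p ! Suc i) = oend src tgt (p ! i)" using ch by simp
    then show ?case using Suc ev sv by simp
  qed
  have "\<not> (oend src tgt (p ! (length p - 1)) \<in> V0)" using en sx p1 by simp
  then have "snd (p ! (length p - 1))" using ev by simp
  then have "even (length p - 1)" using cl[of "length p - 1"] sv pne by simp
  then have "odd (length p)" using pne by (cases "length p") auto
  then show ?thesis using cl sv p_def by simp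
qed

lemma split_nth:
  assumes "odd (length (fe x))"
  shows "length (split_map fe (x,y)) = length (fe x) \<and>
    (\<forall>i<length (fe x). split_map fe (x,y) ! i = ((fst (fe x ! i), pl (length (fe x)) y i), even i))"
  using phi_all[OF assms, of y]
  by (auto simp: split_map_def case_prod_beta)

lemma ostart_orev: "ostart s t (orev d) = oend s t d"
  by (simp add: ostart_def oend_def orev_def)

lemma hd_oimg_start:
  assumes "graph_map s t hv he" "he (fst d) \<noteq> []"
  shows "ostart s t (hd (oimg he d)) = hv (ostart s t d)"
proof -
  have ep: "edge_path s t (hv (s (fst d))) (he (fst d)) (hv (t (fst d)))"
    using assms(1) by (simp add: graph_map_def)
  then have a: "ostart s t (hd (he (fst d))) = hv (s (fst d))"
    and b: "oend s t (last (he (fst d))) = hv (t (fst d))"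
    using assms(2) by (auto simp: edge_path_def)
  show ?thesis
  proof (cases "snd d")
    case True then show ?thesis using a by (simp add: oimg_def ostart_def)
  next
    case False
    then have "hd (oimg he d) = orev (last (he (fst d)))"
      using assms(2) by (simp add: oimg_def rev_path_def hd_rev last_map)
    moreover have "ostart s t d = t (fst d)" using False by (simp add: ostart_def)
    ultimately show ?thesis using b by (simp add: ostart_orev)
  qed
qed


theorem mainTheorem6:
  fixes src tgt :: "'e \<Rightarrow> 'v" and V0 :: "'v set"
    and fv :: "'v \<Rightarrow> 'v" and fe :: "'e \<Rightarrow> 'e oedge list"
  assumes "bipartite_oriented src tgt V0"
    and "graph_map src tgt fv fe"
    and "\<forall>v. v \<in> V0 \<longrightarrow> fv v \<in> V0"
    and "\<forall>v. v \<notin> V0 \<longrightarrow> fv v \<notin> V0"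
    and "\<forall>e. length (fe e) \<ge> 1"
  shows "traintrack_map (split_src src) (split_tgt tgt) fv (split_map fe)"
proof -
  define S where "S = split_src src"
  define T where "T = split_tgt tgt"
  have nz: "fe x \<noteq> []" for x using assms(5)[rule_format, of x] by auto
  have ori: "odd (length (fe x)) \<and> (\<forall>i<length (fe x). snd (fe x ! i) = even i)" for x
    using fe_orient[OF assms(1-4) nz] .
  have sp: "length (split_map fe (x,y)) = length (fe x) \<and>
    (\<forall>i<length (fe x). split_map fe (x,y) ! i = ((fst (fe x ! i), pl (length (fe x)) y i), even i))" for x y
    by (rule split_nth[OF conjunct1[OF ori]])
  have os: "ostart S T (split_map fe (x,y) ! i) = ostart src tgt (fe x ! i)"
    if "i < length (fe x)" for x y i
    using sp[of x y] ori[of x] that by (simp add: S_def T_def ostart_def split_src_def split_tgt_def)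
  have oe: "oend S T (split_map fe (x,y) ! i) = oend src tgt (fe x ! i)"
    if "i < length (fe x)" for x y i
    using sp[of x y] ori[of x] that by (simp add: S_def T_def oend_def split_src_def split_tgt_def)
  have ep: "edge_path src tgt (fv (src x)) (fe x) (fv (tgt x))" for x
    using assms(2) by (simp add: graph_map_def)
  have st: "ostart src tgt (fe x ! 0) = fv (src x)" for x
    using ep[of x] nz[of x] by (simp add: edge_path_def hd_conv_nth)
  have en: "oend src tgt (fe x ! (length (fe x) - 1)) = fv (tgt x)" for x
    using ep[of x] nz[of x] by (simp add: edge_path_def last_conv_nth)
  have ch: "\<And>i. i + 1 < length (fe x) \<Longrightarrow> oend src tgt (fe x ! i) = ostart src tgt (fe x ! (i + 1))" for x
    using ep[of x] nz[of x] by (simp add: edge_path_def)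
  have qne: "split_map fe ey \<noteq> []" for ey
    using sp[of "fst ey" "snd ey"] nz[of "fst ey"] by auto
  have GM: "graph_map S T fv (split_map fe)"
    unfolding graph_map_def
  proof
    fix ey :: "'e \<times> letter"
    obtain x y where xy: "ey = (x,y)" by force
    define q where "q = split_map fe (x,y)"
    have lq: "length q = length (fe x)" using conjunct1[OF sp] q_def by simp
    have "ostart S T (hd q) = fv (S ey)"
      using os[of 0 x y] st[of x] nz[of x] lq qne[of ey] xy q_def
      by (simp add: hd_conv_nth S_def split_src_def)
    moreover have "oend S T (last q) = fv (T ey)"
      using oe[of "length (fe x) - 1" x y] en[of x] nz[of x] lq qne[of ey] xy q_def
      by (simp add: last_conv_nth T_def split_tgt_def)
    moreover have "\<forall>i. i + 1 < length q \<longrightarrow> oend S T (q ! i) = ostart S T (q ! (i + 1))"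
      using oe os ch lq q_def by simp
    ultimately show "edge_path S T (fv (S ey)) (split_map fe ey) (fv (T ey))"
      using qne[of ey] xy q_def by (simp add: edge_path_def)
  qed
  have nb: "split_map fe (x,y) ! (i+1) \<noteq> orev (split_map fe (x,y) ! i) \<and>
            Rl (snd (fst (split_map fe (x,y) ! i))) (snd (fst (split_map fe (x,y) ! (i+1))))"
    if "i + 1 < length (fe x)" for x y i
  proof -
    have r: "Rl (pl (length (fe x)) y i) (pl (length (fe x)) y (i+1))"
      using pl_turn[OF conjunct1[OF ori]] that by simp
    then have "pl (length (fe x)) y i \<noteq> pl (length (fe x)) y (i+1)" using Rl_irrefl by metis
    then show ?thesis using sp[of x y] that r by (simp add: orev_def)
  qed
  have TA: "taut (split_map fe)"
    unfolding taut_def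
  proof
    fix ey :: "'e \<times> letter"
    obtain x y where xy: "ey = (x,y)" by force
    show "split_map fe ey \<noteq> [] \<and> (\<forall>i. i + 1 < length (split_map fe ey) \<longrightarrow>
       split_map fe ey ! (i + 1) \<noteq> orev (split_map fe ey ! i))"
      using qne[of ey] nb[of _ x y] conjunct1[OF sp[of x y]] xy by simp
  qed
  define legal where "legal = (\<lambda>d1 d2. ostart S T d1 = ostart S T d2 \<and> Rl (snd (fst d1)) (snd (fst d2)))"
  have TT: "tt_structure S T legal"
    unfolding tt_structure_def legal_def using Rl_sym Rl_irrefl by metis
  have LP: "legal_path legal (split_map fe ey)" for ey
  proof -
    obtain x y where xy: "ey = (x,y)" by force
    show ?thesis unfolding legal_path_def
    proof (intro allI impI)
      fix i assume i: "i + 1 < length (split_map fe ey)"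
      then have i': "i + 1 < length (fe x)" using conjunct1[OF sp[of x y]] xy by simp
      have "ostart S T (orev (split_map fe ey ! i)) = ostart S T (split_map fe ey ! (i+1))"
        using oe[of i x y] os[of "i+1" x y] ch[OF i'] i' xy by (simp add: ostart_orev)
      then show "split_map fe ey ! (i + 1) \<noteq> orev (split_map fe ey ! i) \<and>
         legal (orev (split_map fe ey ! i)) (split_map fe ey ! (i + 1))"
        using nb[OF i', of y] xy by (simp add: legal_def orev_def)
    qed
  qed
  have letter_hd: "snd (fst (hd (oimg (split_map fe) d))) =
     (if length (fe (fst (fst d))) = 1 then snd (fst d)
      else if snd d then A0 (snd (fst d)) else Aa (snd (fst d)))" for d
  proof -
    obtain x y b where d: "d = ((x,y),b)" by (metis prod.collapse)
    define n where "n = length (fe x)"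
    have o: "odd n" using conjunct1[OF ori] n_def by simp
    have n1: "0 < n" using nz[of x] n_def by simp
    define q where "q = split_map fe (x,y)"
    have lq: "length q = n" using conjunct1[OF sp] q_def n_def by simp
    show ?thesis
    proof (cases b)
      case True
      then have "hd (oimg (split_map fe) d) = q ! 0" using d q_def qne[of "(x,y)"]
        by (simp add: oimg_def hd_conv_nth)
      moreover have "q ! 0 = ((fst (fe x ! 0), pl n y 0), True)"
        using conjunct2[OF sp[of x y]] n1 q_def n_def by simp
      ultimately show ?thesis using True d n_def by (simp add: pl_def)
    next
      case False
      then have "hd (oimg (split_map fe) d) = orev (q ! (n - 1))" using d q_def qne[of "(x,y)"] lq n1
        by (simp add: oimg_def rev_path_def hd_rev last_map last_conv_nth)
      moreover have "q ! (n-1) = ((fst (fe x ! (n-1)), pl n y (n-1)), even (n-1))"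
        using conjunct2[OF sp[of x y]] n1 q_def n_def by simp
      ultimately show ?thesis using False d n_def pl_last[OF o, of y]
        by (simp add: orev_def)
    qed
  qed
  have sV: "(ostart S T d \<in> V0) = snd d" for d
    using assms(1) by (simp add: ostart_def S_def T_def split_src_def split_tgt_def bipartite_oriented_def)
  have snd_eq: "snd d1 = snd d2" if "ostart S T d1 = ostart S T d2" for d1 d2
    using that sV by metis
  have MP: "legal (hd (oimg (split_map fe) d1)) (hd (oimg (split_map fe) d2))" if "legal d1 d2" for d1 d2
  proof -
    have s: "ostart S T d1 = ostart S T d2" and r: "Rl (snd (fst d1)) (snd (fst d2))"
      using that by (auto simp: legal_def)
    have b: "snd d1 = snd d2" using snd_eq s .
    have "ostart S T (hd (oimg (split_map fe) d1)) = ostart S T (hd (oimg (split_map fe) d2))"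
      using hd_oimg_start[OF GM qne] s by simp
    moreover have "Rl (snd (fst (hd (oimg (split_map fe) d1)))) (snd (fst (hd (oimg (split_map fe) d2))))"
      unfolding letter_hd using r b Rl_A0 Rl_Aa by auto
    ultimately show ?thesis by (simp add: legal_def)
  qed
  show ?thesis
    unfolding traintrack_map_def S_def[symmetric] T_def[symmetric]
    using GM TA TT MP LP by blast
qed

end
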